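(* Let $1\le D\le K-1$ and let $\mathbf{L}$ be the $(K,D)$ AIR matrix. Let $\mathbf{L}(j,k)=1$ with $j\ge K-D$. (1) If the entry $(j,k)$ lies in the odd submatrix $\mathbf{I}_{\beta_{2i+1}\lambda_{2i+1}\times\lambda_{2i+1}}$ for some $i\in[0:\lceil l/2\rceil-1]$, then $d_{up}(j,k)=\lambda_{2i+1}$. (2) If the entry $(j,k)$ lies in the even submatrix $\mathbf{I}_{\lambda_{2i}\times\beta_{2i}\lambda_{2i}}$ for some $i\in[0:\lfloor l/2\rfloor]$, and $k_R=k-(K-D-\lambda_{2i-1})=c\lambda_{2i}+d$ with integers $c\ge0$, $0\le d<\lambda_{2i}$, then $d_{up}(j,k)=\lambda_{2i-1}-c\lambda_{2i}$.
   Context: Notation: $[a:b]=\{a,\dots,b\}$. Let $K,D$ be integers with $1\le D\le K-1$. Define $\lambda_{-1}=K-D$, $\lambda_0=D$ and recursively, by Euclidean division, $\lambda_{i-1}=\beta_i\lambda_i+\lambda_{i+1}$ with $0\le\lambda_{i+1}<\lambda_i$, for $i=0,1,2,\dots$, stopping at the index $l\ge0$ with $\lambda_{l+1}=0$; $\beta_0\ge0$ may be $0$, $\beta_i\ge1$ for $i\ge1$. Set $\lambda_j=0$ for $j>l$. For $n\mid m$, $\mathbf{I}_{m\times n}$ is $m/n$ copies of the $n\times n$ identity stacked vertically and $\mathbf{I}_{n\times m}$ its transpose. The $(K,D)$ AIR matrix $\mathbf{L}$ is the $K\times(K-D)$ $0/1$ matrix (rows $[0:K-1]$, columns $[0:K-D-1]$)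 that is zero except in the blocks: the $(K-D)\times(K-D)$ identity in rows and columns $[0:K-D-1]$; for $0\le 2i\le l$, the even submatrix $\mathbf{I}_{\lambda_{2i}\times\beta_{2i}\lambda_{2i}}$ in rows $[K-\lambda_{2i}:K-1]$, columns $[K-D-\lambda_{2i-1}:K-D-\lambda_{2i+1}-1]$ (absent if $i=0,\beta_0=0$); for $1\le 2i+1\le l$, the odd submatrix $\mathbf{I}_{\beta_{2i+1}\lambda_{2i+1}\times\lambda_{2i+1}}$ in rows $[K-\lambda_{2i}:K-\lambda_{2i+2}-1]$, columns $[K-D-\lambda_{2i+1}:K-D-1]$. Up-distance: for $\mathbf{L}(j,k)=1$ with $j\ge K-D$, let $j'$ be the largest row index with $j'<j$ and $\mathbf{L}(j',k)=1$; then $d_{up}(j,k)=j-j'$. *)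

theory Defs
  imports Main
begin

(* lamseq K D n = lambda_{n-1}: Euclidean remainder sequence starting from
   lambda_{-1} = K-D, lambda_0 = D; once a zero occurs all later terms are 0. *)
fun lamseq :: "int \<Rightarrow> int \<Rightarrow> nat \<Rightarrow> int" where
  "lamseq K D 0 = K - D"
| "lamseq K D (Suc 0) = D"
| "lamseq K D (Suc (Suc n)) =
     (if lamseq K D (Suc n) = 0 then 0 else lamseq K D n mod lamseq K D (Suc n))"

definition lam :: "int \<Rightarrow> int \<Rightarrow> int \<Rightarrow> int" where
  "lam K D i = (if i < -1 then 0 else lamseq K D (nat (i + 1)))"

definition beta :: "int \<Rightarrow> int \<Rightarrow> int \<Rightarrow> int" where
  "beta K D i = lam K D (i - 1) div lam K D i"

definition ell :: "int \<Rightarrow> int \<Rightarrow> nat" where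
  "ell K D = (LEAST n::nat. lam K D (int n + 1) = 0)"

definition in_even :: "int \<Rightarrow> int \<Rightarrow> int \<Rightarrow> int \<Rightarrow> int \<Rightarrow> bool" where
  "in_even K D i j k \<longleftrightarrow>
     K - lam K D (2*i) \<le> j \<and> j \<le> K - 1 \<and>
     K - D - lam K D (2*i - 1) \<le> k \<and> k \<le> K - D - lam K D (2*i + 1) - 1"

definition in_odd :: "int \<Rightarrow> int \<Rightarrow> int \<Rightarrow> int \<Rightarrow> int \<Rightarrow> bool" where
  "in_odd K D i j k \<longleftrightarrow>
     K - lam K D (2*i) \<le> j \<and> j \<le> K - lam K D (2*i + 2) - 1 \<and>
     K - D - lam K D (2*i + 1) \<le> k \<and> k \<le> K - D - 1"

(* Inside the even block, relative entry (r,c) is 1 iff r = c mod lambda_{2i}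
   (horizontal concatenation of identities); inside the odd block, (r,c) is 1
   iff r mod lambda_{2i+1} = c (vertical stacking of identities). *)
definition AIR :: "int \<Rightarrow> int \<Rightarrow> int \<Rightarrow> int \<Rightarrow> nat" where
  "AIR K D j k =
    (if 0 \<le> j \<and> j < K \<and> 0 \<le> k \<and> k < K - D \<and>
        ((j < K - D \<and> j = k) \<or>
         (\<exists>i\<ge>0. 2*i \<le> int (ell K D) \<and> in_even K D i j k \<and>
             j - (K - lam K D (2*i)) = (k - (K - D - lam K D (2*i - 1))) mod lam K D (2*i)) \<or>
         (\<exists>i\<ge>0. 2*i + 1 \<le> int (ell K D) \<and> in_odd K D i j k \<and>
             (j - (K - lam K D (2*i))) mod lam K D (2*i + 1) = k - (K - D - lam K D (2*i + 1))))
     then 1 else 0)"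

definition d_up :: "int \<Rightarrow> int \<Rightarrow> int \<Rightarrow> int \<Rightarrow> int" where
  "d_up K D j k = j - (GREATEST j'. j' < j \<and> AIR K D j' k = 1)"

end

theory Submission
  imports Defs
begin

lemma mod_close:
  fixes a b m :: int
  assumes "a mod m = b mod m" "b < a" "a < b + m"
  shows False
proof -
  have "m dvd a - b" using assms(1) by (simp add: mod_eq_dvd_iff)
  then have "m \<le> a - b" using assms(2) by (simp add: zdvd_imp_le)
  then show False using assms(3) by simp
qed

lemma mod_small:
  fixes q m s :: int
  assumes "0 \<le> s" "s < m"
  shows "(q * m + s) mod m = s"
  using assms by (simp add: mod_pos_pos_trivial)

lemma greatest_pred:
  assumes "AIR K D j' k = 1" "j' < j"
    and "\<And>j''. j' < j'' \<Longrightarrow> j'' < j \<Longrightarrow> AIR K D j'' k \<noteq> 1"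
  shows "d_up K D j k = j - j'"
proof -
  have "(GREATEST x. x < j \<and> AIR K D x k = 1) = j'"
  proof (rule Greatest_equality)
    show "j' < j \<and> AIR K D j' k = 1" using assms by simp
    fix y assume "y < j \<and> AIR K D y k = 1"
    then show "y \<le> j'" using assms(3)[of y] by force
  qed
  then show ?thesis unfolding d_up_def by simp
qed

lemma lamseq_nonneg0: "0 \<le> D \<Longrightarrow> D \<le> K \<Longrightarrow> lamseq K D m \<ge> 0"
  by (induction K D m rule: lamseq.induct) (auto simp: pos_mod_sign)

locale airc =
  fixes K D :: int
  assumes D1: "1 \<le> D" and DK: "D \<le> K - 1"
begin

lemma lamseq_nonneg: "lamseq K D m \<ge> 0"
  using lamseq_nonneg0[of D K m] D1 DK by simp

lemma lam_m1: "lam K D (-1) = K - D" by (simp add: lam_def)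
lemma lam_0: "lam K D 0 = D" by (simp add: lam_def)
lemma lam_nonneg: "lam K D n \<ge> 0" by (simp add: lam_def lamseq_nonneg)

lemma lam_step:
  assumes "n \<ge> 0"
  shows "lam K D (n+1) = (if lam K D n = 0 then 0 else lam K D (n-1) mod lam K D n)"
proof -
  have a: "nat (n+1+1) = Suc (Suc (nat n))" using assms by simp
  have b: "nat (n+1) = Suc (nat n)" using assms by simp
  have c: "nat (n-1+1) = nat n" by simp
  have "lam K D (n+1) = lamseq K D (nat (n+1+1))" using assms by (simp add: lam_def)
  also have "\<dots> = (if lamseq K D (Suc (nat n)) = 0 then 0 else lamseq K D (nat n) mod lamseq K D (Suc (nat n)))"
    by (simp only: a lamseq.simps)
  also have "lamseq K D (Suc (nat n)) = lam K D n" using assms b by (simp add: lam_def)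
  also have "lamseq K D (nat n) = lam K D (n-1)" using assms c by (simp add: lam_def)
  finally show ?thesis .
qed

lemma lam_le2:
  assumes "n \<ge> 0"
  shows "lam K D (n+1) \<le> lam K D (n-1)"
  using lam_step[OF assms] lam_nonneg[of n] lam_nonneg[of "n-1"]
  by (auto simp: zmod_le_nonneg_dividend)

lemma lam_le1:
  assumes "n \<ge> 0"
  shows "lam K D (n+1) \<le> lam K D n"
  using lam_step[OF assms] lam_nonneg[of n]
  by (cases "lam K D n = 0") (auto simp: pos_mod_bound less_imp_le)

lemma mono_even:
  assumes "0 \<le> a" "a \<le> b"
  shows "lam K D (2*b) \<le> lam K D (2*a)"
  using assms(2)
proof (induction b rule: int_ge_induct)
  case base then show ?case by simp
next
  case (step i)
  have "lam K D (2*i+1+1) \<le> lam K D (2*i+1-1)" using lam_le2[of "2*i+1"] step assms by simp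
  moreover have "2*i+1+1 = 2*(i+1)" "2*i+1-1 = 2*i" by simp_all
  ultimately show ?case using step by simp
qed

lemma mono_odd:
  assumes "0 \<le> a" "a \<le> b"
  shows "lam K D (2*b-1) \<le> lam K D (2*a-1)"
  using assms(2)
proof (induction b rule: int_ge_induct)
  case base then show ?case by simp
next
  case (step i)
  have "lam K D (2*i+1) \<le> lam K D (2*i-1)" using lam_le2[of "2*i"] step assms by simp
  moreover have eq: "2*(i+1)-1 = 2*i+1" by simp
  ultimately show ?case using step unfolding eq by linarith
qed

lemma mono_odd':
  assumes "0 \<le> a" "a \<le> b"
  shows "lam K D (2*b+1) \<le> lam K D (2*a+1)"
  using mono_odd[of "a+1" "b+1"] assms by (simp add: algebra_simps)

lemma lam_even_le_D: "i \<ge> 0 \<Longrightarrow> lam K D (2*i) \<le> D"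
  using mono_even[of 0 i] lam_0 by simp

lemma lam_odd_le: "i \<ge> 0 \<Longrightarrow> lam K D (2*i+1) \<le> K - D"
  using mono_odd[of 0 "i+1"] lam_m1 by (simp add: algebra_simps)

lemma lam_odd_le': "i \<ge> 0 \<Longrightarrow> lam K D (2*i-1) \<le> K - D"
  using mono_odd[of 0 "i"] lam_m1 by (simp add: algebra_simps)

lemma euclid:
  assumes "i \<ge> 1" "lam K D (2*i-1) > 0"
  obtains q where "lam K D (2*i-2) = q * lam K D (2*i-1) + lam K D (2*i)" "q \<ge> 1"
proof -
  let ?p = "2*i-1"
  have s: "lam K D (?p+1) = lam K D (?p-1) mod lam K D ?p" using lam_step[of ?p] assms by simp
  have le: "lam K D (?p-1+1) \<le> lam K D (?p-1)" using lam_le1[of "?p-1"] assms by simp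
  have e1: "?p + 1 = 2*i" "?p - 1 = 2*i-2" "?p-1+1 = ?p" by simp_all
  define q where "q = lam K D (2*i-2) div lam K D (2*i-1)"
  have "lam K D (2*i-2) = q * lam K D (2*i-1) + lam K D (2*i)"
    using s e1 unfolding q_def by simp
  moreover have "q \<ge> 1"
  proof -
    have "lam K D (2*i-1) div lam K D (2*i-1) \<le> q"
      unfolding q_def using le e1 assms(2) by (intro zdiv_mono1) auto
    then show ?thesis using assms(2) by simp
  qed
  ultimately show ?thesis using that by blast
qed

lemma AIR_cases:
  assumes "AIR K D j k = 1"
  obtains "j < K - D" "j = k"
   | i where "i \<ge> 0" "in_even K D i j k" "j - (K - lam K D (2*i)) = (k - (K - D - lam K D (2*i - 1))) mod lam K D (2*i)"
   | i where "i \<ge> 0" "in_odd K D i j k" "(j - (K - lam K D (2*i))) mod lam K D (2*i + 1) = k - (K - D - lam K D (2*i + 1))"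
  using assms unfolding AIR_def by (simp split: if_splits) blast

lemma AIR_id: "0 \<le> k \<Longrightarrow> k < K - D \<Longrightarrow> AIR K D k k = 1"
  unfolding AIR_def using D1 by auto

lemma AIR_odd:
  assumes "i \<ge> 0" "2*i+1 \<le> int (ell K D)" "in_odd K D i j k"
    "(j - (K - lam K D (2*i))) mod lam K D (2*i + 1) = k - (K - D - lam K D (2*i + 1))"
  shows "AIR K D j k = 1"
proof -
  have "lam K D (2*i) \<le> D" "lam K D (2*i+1) \<le> K - D" "lam K D (2*i+2) \<ge> 0"
    using lam_even_le_D lam_odd_le assms(1) lam_nonneg by auto
  then have "0 \<le> j \<and> j < K \<and> 0 \<le> k \<and> k < K - D" using assms(3) D1 unfolding in_odd_def by auto
  moreover have "\<exists>i\<ge>0. 2*i + 1 \<le> int (ell K D) \<and> in_odd K D i j k \<and>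
             (j - (K - lam K D (2*i))) mod lam K D (2*i + 1) = k - (K - D - lam K D (2*i + 1))"
    using assms by blast
  ultimately show ?thesis unfolding AIR_def by simp
qed

lemma even_odd_disj:
  assumes "i1 \<ge> 0" "i2 \<ge> 0" "in_even K D i1 j k" "in_odd K D i2 j k"
  shows False
proof -
  have "lam K D (2*i1+1) < lam K D (2*i2+1)" using assms unfolding in_even_def in_odd_def by auto
  then have "\<not> i1 \<le> i2" using mono_odd'[of i1 i2] assms by auto
  then have "lam K D (2*i1) \<le> lam K D (2*(i2+1))" using mono_even[of "i2+1" i1] assms by auto
  then show False using assms unfolding in_even_def in_odd_def by (auto simp: algebra_simps)
qed

lemma odd_odd:
  assumes "i1 \<ge> 0" "i2 \<ge> 0" "in_odd K D i1 j k" "in_odd K D i2 j k"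
  shows "i1 = i2"
proof (rule ccontr)
  assume ne: "i1 \<noteq> i2"
  show False
  proof (cases "i1 < i2")
    case True
    then have "lam K D (2*i2) \<le> lam K D (2*(i1+1))" using mono_even[of "i1+1" i2] assms by auto
    then show False using assms unfolding in_odd_def by (auto simp: algebra_simps)
  next
    case False
    then have "lam K D (2*i1) \<le> lam K D (2*(i2+1))" using ne mono_even[of "i2+1" i1] assms by auto
    then show False using assms unfolding in_odd_def by (auto simp: algebra_simps)
  qed
qed

lemma even_even:
  assumes "i1 \<ge> 0" "i2 \<ge> 0" "in_even K D i1 j k" "in_even K D i2 j k"
  shows "i1 = i2"
proof (rule ccontr)
  assume ne: "i1 \<noteq> i2"
  show False
  proof (cases "i1 < i2")
    case True
    then have "lam K D (2*i2-1) \<le> lam K D (2*(i1+1)-1)" using mono_odd[of "i1+1" i2] assms by auto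
    then show False using assms unfolding in_even_def by (auto simp: algebra_simps)
  next
    case False
    then have "lam K D (2*i1-1) \<le> lam K D (2*(i2+1)-1)" using ne mono_odd[of "i2+1" i1] assms by auto
    then show False using assms unfolding in_even_def by (auto simp: algebra_simps)
  qed
qed

lemma odd_unique:
  assumes "i \<ge> 0" "in_odd K D i j k" "AIR K D j k = 1"
  shows "(j - (K - lam K D (2*i))) mod lam K D (2*i + 1) = k - (K - D - lam K D (2*i + 1))"
  using assms(3)
proof (cases rule: AIR_cases)
  case 1
  then show ?thesis using assms lam_even_le_D[of i] unfolding in_odd_def by auto
next
  case (2 i1)
  then show ?thesis using even_odd_disj[of i1 i] assms by auto
next
  case (3 i1)
  then show ?thesis using odd_odd[of i1 i] assms by auto
qed

lemma even_unique:
  assumes "i \<ge> 0" "in_even K D i j k" "AIR K D j k = 1"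
  shows "j - (K - lam K D (2*i)) = (k - (K - D - lam K D (2*i - 1))) mod lam K D (2*i)"
  using assms(3)
proof (cases rule: AIR_cases)
  case 1
  then show ?thesis using assms lam_even_le_D[of i] unfolding in_even_def by auto
next
  case (2 i1)
  then show ?thesis using even_even[of i1 i] assms by auto
next
  case (3 i1)
  then show ?thesis using even_odd_disj[of i i1] assms by auto
qed

lemma low_rows:
  assumes "AIR K D j k = 1" "j < K - D"
  shows "j = k"
  using assms(1)
proof (cases rule: AIR_cases)
  case 1 then show ?thesis by simp
next
  case (2 i1) then show ?thesis using assms lam_even_le_D[of i1] unfolding in_even_def by auto
next
  case (3 i1) then show ?thesis using assms lam_even_le_D[of i1] unfolding in_odd_def by auto
qed


lemma part1:
  assumes air: "AIR K D j k = 1" and i0: "0 \<le> i" and il: "2*i+1 \<le> int (ell K D)"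
    and io: "in_odd K D i j k"
  shows "d_up K D j k = lam K D (2*i + 1)"
proof -
  define lm where "lm = lam K D (2*i+1)"
  define base where "base = K - lam K D (2*i)"
  define x where "x = k - (K - D)"
  have lmpos: "lm > 0" using io unfolding in_odd_def lm_def by auto
  have eqO: "(j - base) mod lm = x + lm"
    using odd_unique[OF i0 io air] unfolding lm_def base_def x_def by simp
  have xr: "- lm \<le> x" "x \<le> -1" using io unfolding in_odd_def lm_def x_def by auto
  have jb: "base \<le> j" "j \<le> K - lam K D (2*i+2) - 1" using io unfolding in_odd_def base_def by auto
  show ?thesis
  proof (cases "j - base \<ge> lm")
    case True
    show ?thesis unfolding lm_def[symmetric]
    proof -
      have io': "in_odd K D i j'' k" if "j - lm \<le> j''" "j'' \<le> j" for j''
        using io that True unfolding in_odd_def base_def by auto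
      have "AIR K D (j - lm) k = 1"
      proof (rule AIR_odd[OF i0 il io'])
        have "(j - lm - base) mod lm = (j - base) mod lm"
          by (metis diff_right_commute minus_mod_self2)
        then show "(j - lm - (K - lam K D (2 * i))) mod lam K D (2 * i + 1) =
             k - (K - D - lam K D (2 * i + 1))" using eqO unfolding base_def lm_def x_def by simp
      qed (use lmpos in auto)
      moreover have "AIR K D j'' k \<noteq> 1" if "j - lm < j''" "j'' < j" for j''
      proof
        assume a: "AIR K D j'' k = 1"
        have "(j'' - base) mod lm = x + lm"
          using odd_unique[OF i0 io'[of j''] a] that unfolding lm_def base_def x_def by simp
        then show False using eqO mod_close[of "j - base" lm "j'' - base"] that by simp
      qed
      ultimately have "d_up K D j k = j - (j - lm)"
        using greatest_pred[of K D "j - lm" k j] lmpos by auto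
      then show "d_up K D j k = lm" by simp
    qed
  next
    case False
    then have r: "j - base = x + lm" using eqO jb by (simp add: mod_pos_pos_trivial)
    show ?thesis unfolding lm_def[symmetric]
    proof (cases "i = 0")
      case True
      have b0: "base = K - D" unfolding base_def True using lam_0 by simp
      have k0: "0 \<le> k" "k < K - D" using xr lam_odd_le[OF i0] unfolding x_def lm_def by auto
      have "AIR K D k k = 1" using AIR_id k0 by simp
      moreover have "AIR K D j'' k \<noteq> 1" if "k < j''" "j'' < j" for j''
      proof
        assume a: "AIR K D j'' k = 1"
        show False
        proof (cases "j'' < K - D")
          case True then show False using low_rows[OF a] that by simp
        next
          case False
          have "in_odd K D i j'' k" using io False that jb b0 base_def unfolding in_odd_def by auto
          then have "(j'' - base) mod lm = x + lm"
            using odd_unique[OF i0 _ a] unfolding lm_def base_def x_def by simp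
          moreover have "(j'' - base) mod lm = j'' - base"
            using False b0 that r xr by (simp add: mod_pos_pos_trivial)
          ultimately show False using r that by simp
        qed
      qed
      moreover have "j = k + lm" using r b0 unfolding x_def by simp
      ultimately show "d_up K D j k = lm"
        using greatest_pred[of K D k k j] lmpos by auto
    next
      case False
      then have i1: "i \<ge> 1" using i0 by simp
      define mu where "mu = lam K D (2*i-1)"
      have lmmu: "lm \<le> mu" using mono_odd[of i "i+1"] i0 unfolding lm_def mu_def
        by (simp add: algebra_simps)
      then have mupos: "mu > 0" using lmpos by simp
      obtain q where q: "lam K D (2*i-2) = q * mu + lam K D (2*i)" "q \<ge> 1"
        using euclid[OF i1] mupos unfolding mu_def by blast
      define base' where "base' = K - lam K D (2*(i-1))"
      have e2: "2*(i-1)+1 = 2*i-1" "2*(i-1)+2 = 2*i" "2*(i-1) = 2*i-2" "2*i-2+2 = 2*i" "2*i-2+1 = 2*i-1" by simp_all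
      have bb: "base - base' = q * mu" unfolding base_def base'_def e2 using q by simp
      define j' where "j' = base + x"
      have rel': "j' - base' = (q - 1) * mu + (x + mu)" unfolding j'_def using bb
        by (simp add: algebra_simps)
      have qm: "(q-1)*mu \<ge> 0" using q(2) mupos by simp
      have io2: "in_odd K D (i-1) j'' k" if "j' \<le> j''" "j'' < base" for j''
      proof -
        have "base' \<le> j''" using that(1) rel' qm xr lmmu by linarith
        moreover have "K - D - mu \<le> k" "k \<le> K - D - 1" using xr lmmu unfolding x_def by linarith+
        ultimately show ?thesis unfolding in_odd_def e2 using that(2)
          unfolding base_def base'_def mu_def e2 by linarith
      qed
      have modj': "(j' - base') mod mu = x + mu"
        unfolding rel' using xr lmmu by (intro mod_small) auto
      have "AIR K D j' k = 1"
      proof (rule AIR_odd[of "i-1"])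
        show "0 \<le> i - 1" "2 * (i - 1) + 1 \<le> int (ell K D)" using i1 il by auto
        show "in_odd K D (i - 1) j' k" using io2[of j'] xr unfolding j'_def by simp
        show "(j' - (K - lam K D (2 * (i - 1)))) mod lam K D (2 * (i - 1) + 1) =
              k - (K - D - lam K D (2 * (i - 1) + 1))"
          using modj' unfolding base'_def e2 mu_def x_def by simp
      qed
      moreover have "AIR K D j'' k \<noteq> 1" if "j' < j''" "j'' < j" for j''
      proof
        assume a: "AIR K D j'' k = 1"
        show False
        proof (cases "j'' < base")
          case True
          have "(j'' - base') mod mu = x + mu"
            using odd_unique[OF _ io2[of j''] a] True that i1 unfolding base'_def e2 mu_def x_def by simp
          then show False using modj' mod_close[of "j'' - base'" mu "j' - base'"] that True xr lmmu
            unfolding j'_def by simp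
        next
          case False
          have "in_odd K D i j'' k" using io False that jb unfolding in_odd_def base_def by auto
          then have "(j'' - base) mod lm = x + lm"
            using odd_unique[OF i0 _ a] unfolding lm_def base_def x_def by simp
          moreover have "(j'' - base) mod lm = j'' - base"
            using False that r xr by (simp add: mod_pos_pos_trivial)
          ultimately show False using r that by simp
        qed
      qed
      moreover have "j = j' + lm" using r unfolding j'_def by simp
      ultimately show "d_up K D j k = lm"
        using greatest_pred[of K D j' k j] lmpos by auto
    qed
  qed
qed


lemma part2:
  assumes air: "AIR K D j k = 1" and i0: "0 \<le> i" and il: "2*i \<le> int (ell K D)"
    and ie: "in_even K D i j k" and c0: "0 \<le> c" and d0: "0 \<le> d" "d < lam K D (2*i)"
    and kr: "k - (K - D - lam K D (2*i - 1)) = c * lam K D (2*i) + d"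
  shows "d_up K D j k = lam K D (2*i - 1) - c * lam K D (2*i)"
proof -
  define lm where "lm = lam K D (2*i)"
  define mu where "mu = lam K D (2*i-1)"
  define base where "base = K - lm"
  define x where "x = k - (K - D)"
  have jd: "j = base + d"
    using even_unique[OF i0 ie air] kr d0 unfolding base_def lm_def by (simp add: mod_small)
  have kx: "x + mu = c * lm + d" using kr unfolding x_def mu_def lm_def by simp
  have xr: "- mu \<le> x" "x \<le> -1" "x < - lam K D (2*i+1)"
    using ie lam_nonneg[of "2*i+1"] unfolding in_even_def mu_def x_def by auto
  have jK: "j \<le> K - 1" using ie unfolding in_even_def by auto
  define j' where "j' = base + x"
  have jj': "j - j' = mu - c * lm" unfolding jd j'_def using kx by simp
  have between_even: "AIR K D j'' k \<noteq> 1" if "base \<le> j''" "j'' < j" for j''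
  proof
    assume a: "AIR K D j'' k = 1"
    have "in_even K D i j'' k" using ie that jK unfolding in_even_def base_def lm_def by auto
    then have "j'' - base = d" using even_unique[OF i0 _ a] kr d0 unfolding base_def lm_def
      by (simp add: mod_small)
    then show False using that jd by simp
  qed
  show ?thesis unfolding lm_def[symmetric] mu_def[symmetric] jj'[symmetric]
  proof (cases "i = 0")
    case True
    have b0: "base = K - D" unfolding base_def lm_def True using lam_0 by simp
    have j'k: "j' = k" unfolding j'_def b0 x_def by simp
    have k0: "0 \<le> k" "k < K - D" using xr lam_odd_le'[OF i0] unfolding x_def mu_def by auto
    have "AIR K D k k = 1" using AIR_id k0 by simp
    moreover have "AIR K D j'' k \<noteq> 1" if "k < j''" "j'' < j" for j''
    proof (cases "j'' < K - D")
      case True then show ?thesis using low_rows that by auto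
    next
      case False then show ?thesis using between_even that b0 by simp
    qed
    moreover have "k < j" using jd b0 d0 k0 by simp
    ultimately show "d_up K D j k = j - j'" unfolding j'k
      using greatest_pred[of K D k k j] by auto
  next
    case False
    then have i1: "i \<ge> 1" using i0 by simp
    have mupos: "mu > 0" using xr by simp
    obtain q where q: "lam K D (2*i-2) = q * mu + lm" "q \<ge> 1"
      using euclid[OF i1] mupos unfolding mu_def lm_def by blast
    define base' where "base' = K - lam K D (2*(i-1))"
    have e2: "2*(i-1)+1 = 2*i-1" "2*(i-1)+2 = 2*i" "2*(i-1) = 2*i-2" "2*i-2+2 = 2*i" "2*i-2+1 = 2*i-1"
      by simp_all
    have bb: "base - base' = q * mu" unfolding base_def base'_def e2 using q by simp
    have rel': "j' - base' = (q - 1) * mu + (x + mu)" unfolding j'_def using bb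
      by (simp add: algebra_simps)
    have qm: "(q-1)*mu \<ge> 0" using q(2) mupos by simp
    have io2: "in_odd K D (i-1) j'' k" if "j' \<le> j''" "j'' < base" for j''
    proof -
      have "base' \<le> j''" using that(1) rel' qm xr by linarith
      moreover have "K - D - mu \<le> k" "k \<le> K - D - 1" using xr unfolding x_def by linarith+
      ultimately show ?thesis unfolding in_odd_def e2 using that(2)
        unfolding base_def base'_def mu_def lm_def e2 by linarith
    qed
    have modj': "(j' - base') mod mu = x + mu"
      unfolding rel' using xr by (intro mod_small) auto
    have "AIR K D j' k = 1"
    proof (rule AIR_odd[of "i-1"])
      show "0 \<le> i - 1" "2 * (i - 1) + 1 \<le> int (ell K D)" using i1 il by auto
      show "in_odd K D (i - 1) j' k" using io2[of j'] xr unfolding j'_def by simp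
      show "(j' - (K - lam K D (2 * (i - 1)))) mod lam K D (2 * (i - 1) + 1) =
            k - (K - D - lam K D (2 * (i - 1) + 1))"
        using modj' unfolding base'_def e2 mu_def x_def by simp
    qed
    moreover have "AIR K D j'' k \<noteq> 1" if "j' < j''" "j'' < j" for j''
    proof (cases "j'' < base")
      case True
      show ?thesis
      proof
        assume a: "AIR K D j'' k = 1"
        have "(j'' - base') mod mu = x + mu"
          using odd_unique[OF _ io2[of j''] a] True that i1 unfolding base'_def e2 mu_def x_def by simp
        then show False using modj' mod_close[of "j'' - base'" mu "j' - base'"] that True xr
          unfolding j'_def by simp
      qed
    next
      case False then show ?thesis using between_even that by simp
    qed
    moreover have "j' < j" unfolding jd j'_def using xr d0 by simp
    ultimately show "d_up K D j k = j - j'"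
      using greatest_pred[of K D j' k j] by auto
  qed
qed

end

theorem lemma2:
  fixes K D j k :: int
  assumes "1 \<le> D" and "D \<le> K - 1"
    and "AIR K D j k = 1" and "j \<ge> K - D"
  shows "(\<forall>i. 0 \<le> i \<and> i \<le> (int (ell K D) + 1) div 2 - 1 \<and> in_odd K D i j k
            \<longrightarrow> d_up K D j k = lam K D (2*i + 1))
       \<and> (\<forall>i c d. 0 \<le> i \<and> i \<le> int (ell K D) div 2 \<and> in_even K D i j k
            \<and> 0 \<le> c \<and> 0 \<le> d \<and> d < lam K D (2*i)
            \<and> k - (K - D - lam K D (2*i - 1)) = c * lam K D (2*i) + d
            \<longrightarrow> d_up K D j k = lam K D (2*i - 1) - c * lam K D (2*i))"
proof -
  interpret airc K D using assms(1,2) by unfold_locales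
  show ?thesis
  proof (intro conjI allI impI)
    fix i assume h: "0 \<le> i \<and> i \<le> (int (ell K D) + 1) div 2 - 1 \<and> in_odd K D i j k"
    then have "2*i+1 \<le> int (ell K D)" by linarith
    then show "d_up K D j k = lam K D (2*i + 1)" using part1[OF assms(3)] h by blast
  next
    fix i c d assume h: "0 \<le> i \<and> i \<le> int (ell K D) div 2 \<and> in_even K D i j k
            \<and> 0 \<le> c \<and> 0 \<le> d \<and> d < lam K D (2*i)
            \<and> k - (K - D - lam K D (2*i - 1)) = c * lam K D (2*i) + d"
    then have "2*i \<le> int (ell K D)" by linarith
    then show "d_up K D j k = lam K D (2*i - 1) - c * lam K D (2*i)"
      using part2[OF assms(3)] h by blast
  qed
qed

end
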